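(* Let $k\ge 2$ and $i\in\{1,\ldots,k-1\}$. If $\binom{k}{i}$ is even, then $J(2k,k,i)$ does not admit perfect state transfer.
   Context: $J(2k,k,i)$ is the graph on the $k$-subsets of $\{1,\ldots,2k\}$ with $A\sim B$ iff $|A\cap B|=i$. For a simple graph $X$ with adjacency matrix $A$, let $\mathcal{H}_X(t)=e^{itA}$. $X$ admits perfect state transfer (PST) if $|\mathcal{H}_X(\tau)_{u,v}|=1$ for some vertices $u\ne v$ and some $\tau>0$. *)

theory Defs
  imports Complex_Main
begin

text \<open>A finite simple graph is given by a finite vertex set V and a symmetric
irreflexive adjacency relation E. Matrices indexed by V are functions
'a \<Rightarrow> 'a \<Rightarrow> complex (only entries on V matter).\<close>

definition adj_matrix :: "('a \<Rightarrow> 'a \<Rightarrow> bool) \<Rightarrow> 'a \<Rightarrow> 'a \<Rightarrow> complex" where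
  "adj_matrix E u v = (if E u v then 1 else 0)"

definition mat_mult :: "'a set \<Rightarrow> ('a \<Rightarrow> 'a \<Rightarrow> complex) \<Rightarrow> ('a \<Rightarrow> 'a \<Rightarrow> complex) \<Rightarrow> 'a \<Rightarrow> 'a \<Rightarrow> complex" where
  "mat_mult V M N u v = (\<Sum>w\<in>V. M u w * N w v)"

fun mat_pow :: "'a set \<Rightarrow> ('a \<Rightarrow> 'a \<Rightarrow> complex) \<Rightarrow> nat \<Rightarrow> 'a \<Rightarrow> 'a \<Rightarrow> complex" where
  "mat_pow V M 0 = (\<lambda>u v. if u = v then 1 else 0)"
| "mat_pow V M (Suc n) = mat_mult V (mat_pow V M n) M"

definition transition_matrix :: "'a set \<Rightarrow> ('a \<Rightarrow> 'a \<Rightarrow> bool) \<Rightarrow> real \<Rightarrow> 'a \<Rightarrow> 'a \<Rightarrow> complex" where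
  "transition_matrix V E t u v =
     (\<Sum>n. ((\<i> * complex_of_real t) ^ n / of_nat (fact n)) * mat_pow V (adj_matrix E) n u v)"

definition admits_PST :: "'a set \<Rightarrow> ('a \<Rightarrow> 'a \<Rightarrow> bool) \<Rightarrow> bool" where
  "admits_PST V E \<longleftrightarrow>
     (\<exists>u\<in>V. \<exists>v\<in>V. u \<noteq> v \<and> (\<exists>\<tau>>0. cmod (transition_matrix V E \<tau> u v) = 1))"

definition J_vertices :: "nat \<Rightarrow> nat \<Rightarrow> nat set set" where
  "J_vertices n k = {A. A \<subseteq> {1..n} \<and> card A = k}"

definition J_adj :: "nat \<Rightarrow> nat set \<Rightarrow> nat set \<Rightarrow> bool" where
  "J_adj i A B \<longleftrightarrow> A \<noteq> B \<and> card (A \<inter> B) = i"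

end

theory Submission
  imports Defs
begin



definition cf :: "real \<Rightarrow> nat \<Rightarrow> complex" where
  "cf t n = (\<i> * complex_of_real t) ^ n / of_nat (fact n)"

lemma tm_cf: "transition_matrix V E t u v = (\<Sum>n. cf t n * mat_pow V (adj_matrix E) n u v)"
  by (simp add: transition_matrix_def cf_def)

lemma adj_norm: "cmod (adj_matrix E u v) \<le> 1"
  by (simp add: adj_matrix_def)

lemma mat_pow_bound:
  assumes "finite V"
  shows "cmod (mat_pow V (adj_matrix E) n u v) \<le> real (card V) ^ n"
proof (induction n arbitrary: v)
  case 0 then show ?case by simp
next
  case (Suc n)
  have "cmod (mat_pow V (adj_matrix E) (Suc n) u v)
     \<le> (\<Sum>w\<in>V. cmod (mat_pow V (adj_matrix E) n u w * adj_matrix E w v))"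
    by (simp add: mat_mult_def norm_sum)
  also have "\<dots> \<le> (\<Sum>w\<in>V. real (card V) ^ n)"
  proof (rule sum_mono)
    fix w assume "w \<in> V"
    have "cmod (mat_pow V (adj_matrix E) n u w * adj_matrix E w v)
        = cmod (mat_pow V (adj_matrix E) n u w) * cmod (adj_matrix E w v)" by (simp add: norm_mult)
    also have "\<dots> \<le> real (card V) ^ n * 1"
      by (rule mult_mono) (use Suc.IH adj_norm in auto)
    finally show "cmod (mat_pow V (adj_matrix E) n u w * adj_matrix E w v) \<le> real (card V) ^ n" by simp
  qed
  also have "\<dots> = real (card V) ^ Suc n" by simp
  finally show ?case .
qed

lemma norm_cf: "cmod (cf t n) = \<bar>t\<bar> ^ n / fact n"
  by (simp add: cf_def norm_divide norm_mult norm_power)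

lemma summable_norm_term:
  assumes "finite V"
  shows "summable (\<lambda>n. norm (cf t n * mat_pow V (adj_matrix E) n u v))"
proof (rule summable_comparison_test[where g = "\<lambda>n. inverse (fact n) * (\<bar>t\<bar> * real (card V)) ^ n"])
  show "summable (\<lambda>n. inverse (fact n) * (\<bar>t\<bar> * real (card V)) ^ n)" by (rule summable_exp)
  show "\<exists>N. \<forall>n\<ge>N. norm (norm (cf t n * mat_pow V (adj_matrix E) n u v))
          \<le> inverse (fact n) * (\<bar>t\<bar> * real (card V)) ^ n"
  proof (intro exI allI impI)
    fix n :: nat
    have "norm (norm (cf t n * mat_pow V (adj_matrix E) n u v))
        = \<bar>t\<bar> ^ n / fact n * cmod (mat_pow V (adj_matrix E) n u v)"
      by (simp add: norm_mult norm_cf)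
    also have "\<dots> \<le> \<bar>t\<bar> ^ n / fact n * real (card V) ^ n"
      by (rule mult_left_mono) (use mat_pow_bound[OF assms] in auto)
    also have "\<dots> = inverse (fact n) * (\<bar>t\<bar> * real (card V)) ^ n"
      by (simp add: power_mult_distrib field_simps)
    finally show "norm (norm (cf t n * mat_pow V (adj_matrix E) n u v))
          \<le> inverse (fact n) * (\<bar>t\<bar> * real (card V)) ^ n" .
  qed
qed

lemma summable_term:
  assumes "finite V"
  shows "summable (\<lambda>n. cf t n * mat_pow V (adj_matrix E) n u v)"
  using summable_norm_cancel[OF summable_norm_term[OF assms]] .

lemma mat_pow_add:
  assumes "finite V" "u \<in> V" "v \<in> V"
  shows "mat_pow V M (n + m) u v = (\<Sum>w\<in>V. mat_pow V M n u w * mat_pow V M m w v)"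
  using assms(3)
proof (induction m arbitrary: v)
  case 0
  have "(\<Sum>w\<in>V. mat_pow V M n u w * mat_pow V M 0 w v) = (\<Sum>w\<in>V. if w = v then mat_pow V M n u v else 0)"
    by (rule sum.cong) auto
  also have "\<dots> = mat_pow V M n u v" using 0 assms(1) by simp
  finally show ?case by simp
next
  case (Suc m)
  have "mat_pow V M (n + Suc m) u v = (\<Sum>w\<in>V. mat_pow V M (n+m) u w * M w v)"
    by (simp add: mat_mult_def)
  also have "\<dots> = (\<Sum>w\<in>V. (\<Sum>z\<in>V. mat_pow V M n u z * mat_pow V M m z w) * M w v)"
    using Suc.IH by simp
  also have "\<dots> = (\<Sum>w\<in>V. \<Sum>z\<in>V. mat_pow V M n u z * (mat_pow V M m z w * M w v))"
    by (simp add: sum_distrib_right mult.assoc)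
  also have "\<dots> = (\<Sum>z\<in>V. \<Sum>w\<in>V. mat_pow V M n u z * (mat_pow V M m z w * M w v))"
    by (rule sum.swap)
  also have "\<dots> = (\<Sum>z\<in>V. mat_pow V M n u z * (\<Sum>w\<in>V. mat_pow V M m z w * M w v))"
    by (simp add: sum_distrib_left)
  also have "\<dots> = (\<Sum>w\<in>V. mat_pow V M n u w * mat_pow V M (Suc m) w v)"
    by (simp add: mat_mult_def)
  finally show ?case .
qed

lemma mat_pow_Suc_left:
  assumes "finite V" "u \<in> V" "v \<in> V"
  shows "mat_pow V M (Suc n) u v = (\<Sum>w\<in>V. M u w * mat_pow V M n w v)"
proof -
  have "mat_pow V M (1 + n) u v = (\<Sum>w\<in>V. mat_pow V M 1 u w * mat_pow V M n w v)"
    by (rule mat_pow_add[OF assms])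
  also have "\<dots> = (\<Sum>w\<in>V. M u w * mat_pow V M n w v)"
  proof (rule sum.cong[OF refl])
    fix w assume "w \<in> V"
    have "mat_pow V M 1 u w = (\<Sum>z\<in>V. (if u = z then 1 else 0) * M z w)" by (simp add: mat_mult_def)
    also have "\<dots> = (\<Sum>z\<in>V. if u = z then M z w else 0)" by (rule sum.cong) auto
    also have "\<dots> = M u w" using assms by simp
    finally show "mat_pow V M 1 u w * mat_pow V M n w v = M u w * mat_pow V M n w v" by simp
  qed
  finally show ?thesis by simp
qed

lemma mat_pow_sym:
  assumes "finite V" "u \<in> V" "v \<in> V" "\<And>x y. x \<in> V \<Longrightarrow> y \<in> V \<Longrightarrow> M x y = M y x"
  shows "mat_pow V M n u v = mat_pow V M n v u"
  using assms(2,3)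
proof (induction n arbitrary: u v)
  case 0 then show ?case by simp
next
  case (Suc n)
  have "mat_pow V M (Suc n) u v = (\<Sum>w\<in>V. mat_pow V M n u w * M w v)" by (simp add: mat_mult_def)
  also have "\<dots> = (\<Sum>w\<in>V. M v w * mat_pow V M n w u)"
    by (rule sum.cong[OF refl]) (use Suc assms(4) in \<open>auto simp: mult.commute\<close>)
  also have "\<dots> = mat_pow V M (Suc n) v u" by (rule mat_pow_Suc_left[symmetric]) (use assms Suc in auto)
  finally show ?case .
qed

lemma mat_pow_cnj: "cnj (mat_pow V (adj_matrix E) n u v) = mat_pow V (adj_matrix E) n u v"
proof (induction n arbitrary: v)
  case 0 then show ?case by simp
next
  case (Suc n)
  have "cnj (adj_matrix E w v) = adj_matrix E w v" for w by (simp add: adj_matrix_def)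
  then show ?case using Suc by (simp add: mat_mult_def)
qed

lemma mat_pow_eigen:
  assumes "finite V" "u \<in> V"
    and eig: "\<And>x. x \<in> V \<Longrightarrow> (\<Sum>w\<in>V. M x w * f w) = \<theta> * f x"
  shows "(\<Sum>w\<in>V. mat_pow V M n u w * f w) = \<theta> ^ n * f u"
proof (induction n)
  case 0
  have "(\<Sum>w\<in>V. mat_pow V M 0 u w * f w) = (\<Sum>w\<in>V. if w = u then f u else 0)"
    by (rule sum.cong) auto
  then show ?case using assms by simp
next
  case (Suc n)
  have "(\<Sum>w\<in>V. mat_pow V M (Suc n) u w * f w) = (\<Sum>w\<in>V. (\<Sum>z\<in>V. mat_pow V M n u z * M z w) * f w)"
    by (simp add: mat_mult_def)
  also have "\<dots> = (\<Sum>w\<in>V. \<Sum>z\<in>V. mat_pow V M n u z * (M z w * f w))"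
    by (simp add: sum_distrib_right mult.assoc)
  also have "\<dots> = (\<Sum>z\<in>V. \<Sum>w\<in>V. mat_pow V M n u z * (M z w * f w))"
    by (rule sum.swap)
  also have "\<dots> = (\<Sum>z\<in>V. mat_pow V M n u z * (\<Sum>w\<in>V. M z w * f w))"
    by (simp add: sum_distrib_left)
  also have "\<dots> = (\<Sum>z\<in>V. mat_pow V M n u z * (\<theta> * f z))"
    by (rule sum.cong) (use eig in auto)
  also have "\<dots> = \<theta> * (\<Sum>z\<in>V. mat_pow V M n u z * f z)"
    by (simp add: sum_distrib_left mult.assoc mult.left_commute)
  also have "\<dots> = \<theta> ^ Suc n * f u" using Suc by simp
  finally show ?case .
qed

lemma exp_sums_cf: "(\<lambda>n. cf t n * x ^ n) sums exp (\<i> * complex_of_real t * x)"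
proof -
  have "(\<lambda>n. (\<i> * complex_of_real t * x) ^ n /\<^sub>R fact n) sums exp (\<i> * complex_of_real t * x)"
    by (rule exp_converges)
  moreover have "(\<lambda>n. (\<i> * complex_of_real t * x) ^ n /\<^sub>R fact n) = (\<lambda>n. cf t n * x ^ n)"
    by (rule ext) (simp add: cf_def power_mult_distrib scaleR_conv_of_real divide_inverse)
  ultimately show ?thesis by simp
qed

lemma H_eigen:
  assumes "finite V" "u \<in> V"
    and eig: "\<And>x. x \<in> V \<Longrightarrow> (\<Sum>w\<in>V. adj_matrix E x w * f w) = \<theta> * f x"
  shows "(\<Sum>w\<in>V. transition_matrix V E t u w * f w) = exp (\<i> * complex_of_real t * \<theta>) * f u"
proof -
  have "(\<Sum>w\<in>V. transition_matrix V E t u w * f w)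
      = (\<Sum>w\<in>V. \<Sum>n. cf t n * mat_pow V (adj_matrix E) n u w * f w)"
    by (simp add: tm_cf suminf_mult2[OF summable_term[OF assms(1)]])
  also have "\<dots> = (\<Sum>n. \<Sum>w\<in>V. cf t n * mat_pow V (adj_matrix E) n u w * f w)"
    by (rule suminf_sum[symmetric]) (intro summable_mult2 summable_term assms(1))
  also have "\<dots> = (\<Sum>n. cf t n * \<theta> ^ n * f u)"
  proof (rule arg_cong[where f = suminf], rule ext)
    fix n
    have "(\<Sum>w\<in>V. cf t n * mat_pow V (adj_matrix E) n u w * f w)
        = cf t n * (\<Sum>w\<in>V. mat_pow V (adj_matrix E) n u w * f w)"
      by (simp add: sum_distrib_left mult.assoc)
    also have "\<dots> = cf t n * \<theta> ^ n * f u"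
      using mat_pow_eigen[OF assms(1,2) eig] by simp
    finally show "(\<Sum>w\<in>V. cf t n * mat_pow V (adj_matrix E) n u w * f w) = cf t n * \<theta> ^ n * f u" .
  qed
  also have "\<dots> = exp (\<i> * complex_of_real t * \<theta>) * f u"
    using sums_mult2[OF exp_sums_cf[of t \<theta>], of "f u"] by (simp add: sums_iff)
  finally show ?thesis .
qed





lemma cf_binom: "(\<Sum>n\<le>N. cf s n * cf t (N - n)) = cf (s + t) N"
proof -
  have "cf (s + t) N = (\<i> * complex_of_real s + \<i> * complex_of_real t) ^ N / of_nat (fact N)"
    by (simp add: cf_def distrib_left)
  also have "\<dots> = (\<Sum>n\<le>N. of_nat (N choose n) * (\<i> * complex_of_real s) ^ n * (\<i> * complex_of_real t) ^ (N - n)) / of_nat (fact N)"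
    by (simp add: binomial_ring)
  also have "\<dots> = (\<Sum>n\<le>N. of_nat (N choose n) * (\<i> * complex_of_real s) ^ n * (\<i> * complex_of_real t) ^ (N - n) / of_nat (fact N))"
    by (simp add: sum_divide_distrib)
  also have "\<dots> = (\<Sum>n\<le>N. cf s n * cf t (N - n))"
  proof (rule sum.cong[OF refl])
    fix n assume "n \<in> {..N}"
    then have nN: "n \<le> N" by simp
    have "(of_nat (N choose n) :: complex) = fact N / (fact n * fact (N - n))"
      by (rule binomial_fact[OF nN])
    then show "of_nat (N choose n) * (\<i> * complex_of_real s) ^ n * (\<i> * complex_of_real t) ^ (N - n) / of_nat (fact N) = cf s n * cf t (N - n)"
      by (simp add: cf_def)
  qed
  finally show ?thesis by simp
qed

lemma tm_cnj:
  assumes "finite V"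
  shows "cnj (transition_matrix V E t u v) = transition_matrix V E (-t) u v"
proof -
  have "(\<lambda>n. cf t n * mat_pow V (adj_matrix E) n u v) sums transition_matrix V E t u v"
    unfolding tm_cf by (rule summable_sums[OF summable_term[OF assms]])
  then have "(\<lambda>n. cnj (cf t n * mat_pow V (adj_matrix E) n u v)) sums cnj (transition_matrix V E t u v)"
    by (simp only: sums_cnj)
  moreover have "(\<lambda>n. cnj (cf t n * mat_pow V (adj_matrix E) n u v)) = (\<lambda>n. cf (-t) n * mat_pow V (adj_matrix E) n u v)"
    by (rule ext) (simp add: mat_pow_cnj cf_def)
  ultimately show ?thesis by (simp add: tm_cf sums_iff)
qed

lemma tm_sym:
  assumes "finite V" "u \<in> V" "v \<in> V" "\<And>x y. E x y = E y x"
  shows "transition_matrix V E t u v = transition_matrix V E t v u"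
proof -
  have "mat_pow V (adj_matrix E) n u v = mat_pow V (adj_matrix E) n v u" for n
    by (rule mat_pow_sym) (use assms in \<open>auto simp: adj_matrix_def\<close>)
  then show ?thesis by (simp add: tm_cf)
qed

lemma tm_mult:
  assumes "finite V" "u \<in> V" "v \<in> V"
  shows "(\<Sum>w\<in>V. transition_matrix V E s u w * transition_matrix V E t w v) = transition_matrix V E (s + t) u v"
proof -
  let ?P = "mat_pow V (adj_matrix E)"
  have "(\<lambda>N. \<Sum>w\<in>V. \<Sum>n\<le>N. (cf s n * ?P n u w) * (cf t (N - n) * ?P (N - n) w v))
         sums (\<Sum>w\<in>V. transition_matrix V E s u w * transition_matrix V E t w v)"
  proof (rule sums_sum)
    fix w assume "w \<in> V"
    show "(\<lambda>N. \<Sum>n\<le>N. (cf s n * ?P n u w) * (cf t (N - n) * ?P (N - n) w v))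
         sums (transition_matrix V E s u w * transition_matrix V E t w v)"
      unfolding tm_cf by (rule Cauchy_product_sums) (rule summable_norm_term[OF assms(1)])+
  qed
  moreover have "(\<lambda>N. \<Sum>w\<in>V. \<Sum>n\<le>N. (cf s n * ?P n u w) * (cf t (N - n) * ?P (N - n) w v))
       = (\<lambda>N. cf (s + t) N * ?P N u v)"
  proof (rule ext)
    fix N
    have "(\<Sum>w\<in>V. \<Sum>n\<le>N. (cf s n * ?P n u w) * (cf t (N - n) * ?P (N - n) w v))
        = (\<Sum>n\<le>N. \<Sum>w\<in>V. (cf s n * cf t (N - n)) * (?P n u w * ?P (N - n) w v))"
      by (subst sum.swap) (simp add: mult_ac)
    also have "\<dots> = (\<Sum>n\<le>N. (cf s n * cf t (N - n)) * ?P N u v)"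
    proof (rule sum.cong[OF refl])
      fix n assume "n \<in> {..N}"
      then have "n + (N - n) = N" by simp
      then have "?P N u v = (\<Sum>w\<in>V. ?P n u w * ?P (N - n) w v)"
        using mat_pow_add[OF assms, of "adj_matrix E" n "N - n"] by simp
      then show "(\<Sum>w\<in>V. (cf s n * cf t (N - n)) * (?P n u w * ?P (N - n) w v)) = (cf s n * cf t (N - n)) * ?P N u v"
        by (simp add: sum_distrib_left)
    qed
    also have "\<dots> = cf (s + t) N * ?P N u v"
      by (simp add: sum_distrib_right[symmetric] cf_binom)
    finally show "(\<Sum>w\<in>V. \<Sum>n\<le>N. (cf s n * ?P n u w) * (cf t (N - n) * ?P (N - n) w v)) = cf (s + t) N * ?P N u v" .
  qed
  moreover have "(\<lambda>N. cf (s + t) N * ?P N u v) sums transition_matrix V E (s + t) u v"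
    unfolding tm_cf by (rule summable_sums[OF summable_term[OF assms(1)]])
  ultimately show ?thesis using sums_unique2 by metis
qed

lemma tm_zero:
  assumes "u \<in> V"
  shows "transition_matrix V E 0 u u = 1"
proof -
  have "(\<lambda>n. cf 0 n * mat_pow V (adj_matrix E) n u u) = (\<lambda>n. if n = 0 then 1 else 0)"
    by (rule ext) (simp add: cf_def)
  then show ?thesis using sums_single[of 0 "\<lambda>_. 1::complex"] by (simp add: tm_cf sums_iff)
qed

lemma tm_unitary:
  assumes "finite V" "u \<in> V" "\<And>x y. E x y = E y x"
  shows "(\<Sum>w\<in>V. (cmod (transition_matrix V E t u w))\<^sup>2) = 1"
proof -
  have "complex_of_real (\<Sum>w\<in>V. (cmod (transition_matrix V E t u w))\<^sup>2)
      = (\<Sum>w\<in>V. transition_matrix V E t u w * cnj (transition_matrix V E t u w))"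
    unfolding of_real_sum by (rule sum.cong[OF refl]) (rule complex_norm_square)
  also have "\<dots> = (\<Sum>w\<in>V. transition_matrix V E t u w * transition_matrix V E (-t) w u)"
    by (rule sum.cong[OF refl]) (simp add: tm_cnj[OF assms(1)] tm_sym[OF assms(1) assms(2) _ assms(3)])
  also have "\<dots> = 1"
    using tm_mult[OF assms(1,2,2), of E t "-t"] tm_zero[OF assms(2)] by simp
  finally show ?thesis by (metis of_real_eq_1_iff)
qed




lemma pst_eigen:
  assumes "finite V" "u \<in> V" "v \<in> V" "\<And>x y. E x y = E y x"
    and pst: "cmod (transition_matrix V E \<tau> u v) = 1"
    and eig: "\<And>x. x \<in> V \<Longrightarrow> (\<Sum>w\<in>V. adj_matrix E x w * f w) = \<theta> * f x"
  shows "exp (\<i> * complex_of_real \<tau> * \<theta>) * f u = transition_matrix V E \<tau> u v * f v"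
proof -
  let ?H = "transition_matrix V E \<tau>"
  have "(\<Sum>w\<in>V. (cmod (?H u w))\<^sup>2) = 1" by (rule tm_unitary[OF assms(1,2,4)])
  moreover have "(\<Sum>w\<in>V. (cmod (?H u w))\<^sup>2) = (cmod (?H u v))\<^sup>2 + (\<Sum>w\<in>V-{v}. (cmod (?H u w))\<^sup>2)"
    using sum.remove[OF assms(1,3)] by blast
  ultimately have "(\<Sum>w\<in>V-{v}. (cmod (?H u w))\<^sup>2) = 0" using pst by simp
  then have z: "\<And>w. w \<in> V - {v} \<Longrightarrow> ?H u w = 0"
    using sum_nonneg_eq_0_iff[of "V - {v}" "\<lambda>w. (cmod (?H u w))\<^sup>2"] assms(1) by auto
  have "(\<Sum>w\<in>V. ?H u w * f w) = ?H u v * f v + (\<Sum>w\<in>V-{v}. ?H u w * f w)"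
    using sum.remove[OF assms(1,3)] by blast
  also have "(\<Sum>w\<in>V-{v}. ?H u w * f w) = 0" using z by simp
  finally have "(\<Sum>w\<in>V. ?H u w * f w) = ?H u v * f v" by simp
  moreover have "(\<Sum>w\<in>V. ?H u w * f w) = exp (\<i> * complex_of_real \<tau> * \<theta>) * f u"
    by (rule H_eigen[OF assms(1,2) eig])
  ultimately show ?thesis by simp
qed

lemma count_split:
  assumes "finite S" "B \<subseteq> S" "i \<le> k"
  shows "card {D. D \<subseteq> S \<and> card D = k \<and> card (D \<inter> B) = i} = (card B choose i) * (card (S - B) choose (k - i))"
proof -
  let ?X = "{X. X \<subseteq> B \<and> card X = i}" and ?Y = "{Y. Y \<subseteq> S - B \<and> card Y = k - i}"
  have fB: "finite B" by (rule finite_subset[OF assms(2,1)])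
  have img: "{D. D \<subseteq> S \<and> card D = k \<and> card (D \<inter> B) = i} = (\<lambda>(X, Y). X \<union> Y) ` (?X \<times> ?Y)"
  proof (rule set_eqI, rule iffI)
    fix D assume D: "D \<in> {D. D \<subseteq> S \<and> card D = k \<and> card (D \<inter> B) = i}"
    then have "D \<subseteq> S" by simp
    then have fD: "finite D" using assms(1) by (rule finite_subset)
    have "card (D - B) = card D - card (D \<inter> B)"
      using card_Diff_subset_Int[of D B] fD by simp
    then have "card (D - B) = k - i" using D by simp
    moreover have "D = (D \<inter> B) \<union> (D - B)" by blast
    ultimately show "D \<in> (\<lambda>(X, Y). X \<union> Y) ` (?X \<times> ?Y)" using D
      by (intro image_eqI[where x = "(D \<inter> B, D - B)"]) auto
  next
    fix D assume "D \<in> (\<lambda>(X, Y). X \<union> Y) ` (?X \<times> ?Y)"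
    then obtain X Y where XY: "X \<in> ?X" "Y \<in> ?Y" "D = X \<union> Y" by auto
    have fX: "finite X" by (rule finite_subset[of X B]) (use XY fB in auto)
    have fY: "finite Y" by (rule finite_subset[of Y S]) (use XY assms(1) in auto)
    have "X \<inter> Y = {}" using XY by auto
    then have "card D = card X + card Y" using XY(3) fX fY card_Un_disjoint by simp
    moreover have "D \<inter> B = X" using XY by auto
    ultimately show "D \<in> {D. D \<subseteq> S \<and> card D = k \<and> card (D \<inter> B) = i}" using XY assms by auto
  qed
  have inj: "inj_on (\<lambda>(X, Y). X \<union> Y) (?X \<times> ?Y)"
  proof (rule inj_onI, clarsimp)
    fix X Y X' Y' assume "X \<subseteq> B" "Y \<subseteq> S - B" "X' \<subseteq> B" "Y' \<subseteq> S - B" "X \<union> Y = X' \<union> Y'"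
    then show "X = X' \<and> Y = Y'" by blast
  qed
  have "card {D. D \<subseteq> S \<and> card D = k \<and> card (D \<inter> B) = i} = card ?X * card ?Y"
    unfolding img card_image[OF inj] card_cartesian_product by simp
  also have "\<dots> = (card B choose i) * (card (S - B) choose (k - i))"
    using n_subsets[OF fB, of i] n_subsets[of "S - B" "k - i"] assms(1) by simp
  finally show ?thesis .
qed




lemma J_fin: "finite (J_vertices n k)"
proof -
  have "J_vertices n k \<subseteq> Pow {1..n}" by (auto simp: J_vertices_def)
  then show ?thesis by (rule finite_subset) simp
qed

lemma J_sym: "J_adj i x y = J_adj i y x"
  by (auto simp: J_adj_def Int_commute)

lemma J_adj_sum:
  assumes "B \<in> J_vertices n k" "i < k"
  shows "(\<Sum>D\<in>J_vertices n k. adj_matrix (J_adj i) B D * f D) = (\<Sum>D\<in>{D\<in>J_vertices n k. card (D \<inter> B) = i}. f D)"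
proof -
  have "(\<Sum>D\<in>J_vertices n k. adj_matrix (J_adj i) B D * f D)
      = (\<Sum>D\<in>J_vertices n k. if card (D \<inter> B) = i then f D else 0)"
  proof (rule sum.cong[OF refl])
    fix D assume "D \<in> J_vertices n k"
    have "card (B \<inter> B) = k" using assms(1) by (simp add: J_vertices_def)
    then have "card (D \<inter> B) = i \<Longrightarrow> B \<noteq> D" using assms(2) by auto
    then show "adj_matrix (J_adj i) B D * f D = (if card (D \<inter> B) = i then f D else 0)"
      by (auto simp: adj_matrix_def J_adj_def Int_commute)
  qed
  also have "\<dots> = (\<Sum>D\<in>{D\<in>J_vertices n k. card (D \<inter> B) = i}. f D)"
    by (rule sum.inter_filter[symmetric, OF J_fin])
  finally show ?thesis .
qed

lemma J_card_S: "card {1..2*k} = 2 * k" by simp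

lemma J_count_all:
  assumes "B \<in> J_vertices (2*k) k" "i \<le> k"
  shows "card {D\<in>J_vertices (2*k) k. card (D \<inter> B) = i} = (k choose i) * (k choose i)"
proof -
  have BS: "B \<subseteq> {1..2*k}" and cB: "card B = k" using assms by (auto simp: J_vertices_def)
  have "card ({1..2*k} - B) = k" using card_Diff_subset[OF finite_subset[OF BS] BS] cB by simp
  moreover have "{D\<in>J_vertices (2*k) k. card (D \<inter> B) = i} = {D. D \<subseteq> {1..2*k} \<and> card D = k \<and> card (D \<inter> B) = i}"
    by (auto simp: J_vertices_def)
  ultimately show ?thesis
    using count_split[OF _ BS assms(2)] cB binomial_symmetric[OF assms(2)] by simp
qed

lemma J_count_out:
  assumes "B \<in> J_vertices (2*k) k" "i \<le> k" "x \<in> {1..2*k}"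
  shows "card {D\<in>{D\<in>J_vertices (2*k) k. card (D \<inter> B) = i}. x \<notin> D}
     = (if x \<in> B then (k - 1 choose i) * (k choose i) else (k choose i) * (k - 1 choose (k - i)))"
proof -
  let ?S = "{1..2*k} - {x}" and ?B = "B - {x}"
  have BS: "B \<subseteq> {1..2*k}" and cB: "card B = k" using assms by (auto simp: J_vertices_def)
  have fB: "finite B" using finite_subset[OF BS] by simp
  have "{D\<in>{D\<in>J_vertices (2*k) k. card (D \<inter> B) = i}. x \<notin> D} = {D. D \<subseteq> ?S \<and> card D = k \<and> card (D \<inter> ?B) = i}"
  proof (rule set_eqI)
    fix D
    show "D \<in> {D\<in>{D\<in>J_vertices (2*k) k. card (D \<inter> B) = i}. x \<notin> D} \<longleftrightarrow> D \<in> {D. D \<subseteq> ?S \<and> card D = k \<and> card (D \<inter> ?B) = i}"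
    proof
      assume a: "D \<in> {D\<in>{D\<in>J_vertices (2*k) k. card (D \<inter> B) = i}. x \<notin> D}"
      then have "D \<inter> ?B = D \<inter> B" "D \<subseteq> ?S" by (auto simp: J_vertices_def)
      with a show "D \<in> {D. D \<subseteq> ?S \<and> card D = k \<and> card (D \<inter> ?B) = i}" by (simp add: J_vertices_def)
    next
      assume a: "D \<in> {D. D \<subseteq> ?S \<and> card D = k \<and> card (D \<inter> ?B) = i}"
      then have "D \<inter> ?B = D \<inter> B" "D \<subseteq> {1..2*k}" "x \<notin> D" by auto
      with a show "D \<in> {D\<in>{D\<in>J_vertices (2*k) k. card (D \<inter> B) = i}. x \<notin> D}" by (simp add: J_vertices_def)
    qed
  qed
  moreover have "card {D. D \<subseteq> ?S \<and> card D = k \<and> card (D \<inter> ?B) = i} = (card ?B choose i) * (card (?S - ?B) choose (k - i))"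
    by (rule count_split) (use BS assms(2) in auto)
  moreover have "card (?S - ?B) = (if x \<in> B then k else k - 1)"
  proof -
    have "?S - ?B = ({1..2*k} - B) - {x}" by blast
    moreover have "card ({1..2*k} - B) = k" using card_Diff_subset[OF fB BS] cB by simp
    ultimately show ?thesis using assms(3) by (auto simp: card_Diff_singleton_if)
  qed
  moreover have "card ?B = (if x \<in> B then k - 1 else k)" using cB fB by (simp add: card_Diff_singleton_if)
  moreover have "(k choose (k - i)) = (k choose i)" using binomial_symmetric[OF assms(2)] by simp
  ultimately show ?thesis by (auto simp: mult.commute)
qed




lemma pascal:
  assumes "1 \<le> i" "1 \<le> k"
  shows "k choose i = (k - 1 choose (i - 1)) + (k - 1 choose i)"
proof -
  obtain k' i' where "k = Suc k'" "i = Suc i'" using assms by (metis Suc_le_D One_nat_def)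
  then show ?thesis by simp
qed

lemma eig_const:
  assumes "B \<in> J_vertices (2*k) k" "i < k"
  shows "(\<Sum>D\<in>J_vertices (2*k) k. adj_matrix (J_adj i) B D * (\<lambda>_. 1) D) = of_nat ((k choose i) * (k choose i)) * 1"
  using J_adj_sum[OF assms, of "\<lambda>_. 1"] J_count_all[OF assms(1)] assms(2) by simp

lemma eig_g:
  assumes "B \<in> J_vertices (2*k) k" "1 \<le> i" "i < k" "x \<in> {1..2*k}"
  shows "(\<Sum>D\<in>J_vertices (2*k) k. adj_matrix (J_adj i) B D * (\<lambda>D. if x \<in> D then 1 else -1) D)
      = (of_nat (k choose i) * (of_nat (k - 1 choose (i - 1)) - of_nat (k - 1 choose i))) * (\<lambda>D. if x \<in> D then 1 else -1) B"
proof -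
  let ?N = "{D\<in>J_vertices (2*k) k. card (D \<inter> B) = i}"
  let ?C = "k choose i" and ?a = "k - 1 choose i" and ?b = "k - 1 choose (i - 1)"
  have fN: "finite ?N" using J_fin by simp
  have "(\<Sum>D\<in>J_vertices (2*k) k. adj_matrix (J_adj i) B D * (\<lambda>D. if x \<in> D then 1 else -1) D)
      = (\<Sum>D\<in>?N. (if x \<in> D then 1 else -1 :: complex))"
    using J_adj_sum[OF assms(1,3)] by simp
  also have "\<dots> = (\<Sum>D\<in>?N. 1 - (if x \<notin> D then 2 else 0 :: complex))"
    by (rule sum.cong) auto
  also have "\<dots> = of_nat (card ?N) - (\<Sum>D\<in>?N. (if x \<notin> D then 2 else 0 :: complex))"
    by (simp add: sum_subtractf)
  also have "(\<Sum>D\<in>?N. (if x \<notin> D then 2 else 0 :: complex)) = (\<Sum>D\<in>{D\<in>?N. x \<notin> D}. 2)"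
    by (rule sum.inter_filter[symmetric, OF fN])
  also have "\<dots> = 2 * of_nat (card {D\<in>?N. x \<notin> D})" by simp
  finally have s: "(\<Sum>D\<in>J_vertices (2*k) k. adj_matrix (J_adj i) B D * (\<lambda>D. if x \<in> D then 1 else -1) D)
      = of_nat (card ?N) - 2 * of_nat (card {D\<in>?N. x \<notin> D})" .
  have cN: "card ?N = ?C * ?C" using J_count_all[OF assms(1)] assms(3) by simp
  have P: "?C = ?b + ?a" using pascal assms by simp
  have sym: "(k - 1 choose (k - i)) = ?b"
    using binomial_symmetric[of "i - 1" "k - 1"] assms by simp
  show ?thesis
  proof (cases "x \<in> B")
    case True
    then have "card {D\<in>?N. x \<notin> D} = ?a * ?C" using J_count_out[OF assms(1) _ assms(4)] assms by simp
    then show ?thesis using s cN True P by (simp add: algebra_simps)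
  next
    case False
    then have "card {D\<in>?N. x \<notin> D} = ?C * ?b" using J_count_out[OF assms(1) _ assms(4)] assms sym by simp
    then show ?thesis using s cN False P by (simp add: algebra_simps)
  qed
qed




definition DT :: "nat set \<Rightarrow> (nat \<Rightarrow> nat) \<Rightarrow> nat set \<Rightarrow> nat set" where
  "DT U p T = T \<union> p ` (U - T)"

definition sg :: "nat set \<Rightarrow> nat set \<Rightarrow> complex" where
  "sg U T = (\<Prod>y\<in>U. if y \<in> T then 1 else -1)"

definition fk :: "nat set \<Rightarrow> (nat \<Rightarrow> nat) \<Rightarrow> nat set \<Rightarrow> complex" where
  "fk U p D = (\<Sum>T\<in>Pow U. if D = DT U p T then sg U T else 0)"

locale matching =
  fixes k :: nat and U :: "nat set" and p :: "nat \<Rightarrow> nat"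
  assumes US: "U \<subseteq> {1..2*k}" and cU: "card U = k" and bij: "bij_betw p U ({1..2*k} - U)"
begin

lemma fU: "finite U" using finite_subset[OF US] by simp
lemma inj: "inj_on p U" using bij by (simp add: bij_betw_def)
lemma pU: "p ` U = {1..2*k} - U" using bij by (simp add: bij_betw_def)
lemma p_notin: "y \<in> U \<Longrightarrow> p y \<notin> U" using pU by blast
lemma p_in: "y \<in> U \<Longrightarrow> p y \<in> {1..2*k}" using pU by blast

lemma DT_U: "T \<subseteq> U \<Longrightarrow> DT U p T \<inter> U = T"
  unfolding DT_def using p_notin by blast

lemma DT_inj: "T \<subseteq> U \<Longrightarrow> T' \<subseteq> U \<Longrightarrow> DT U p T = DT U p T' \<Longrightarrow> T = T'"
  using DT_U by metis

lemma DT_V: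
  assumes "T \<subseteq> U"
  shows "DT U p T \<in> J_vertices (2*k) k"
proof -
  have fT: "finite T" using finite_subset[OF assms fU] .
  have sub: "DT U p T \<subseteq> {1..2*k}" unfolding DT_def using assms US p_in by blast
  have disj: "T \<inter> p ` (U - T) = {}" using assms p_notin by blast
  have "card (p ` (U - T)) = card (U - T)"
    by (rule card_image) (rule inj_on_subset[OF inj], blast)
  also have "\<dots> = k - card T" using card_Diff_subset[OF fT assms] cU by simp
  finally have "card (DT U p T) = card T + (k - card T)"
    unfolding DT_def using card_Un_disjoint[OF fT _ disj] fU by simp
  moreover have "card T \<le> k" using card_mono[OF fU assms] cU by simp
  ultimately show ?thesis using sub by (simp add: J_vertices_def)
qed

lemma fk_DT:
  assumes "T0 \<subseteq> U"
  shows "fk U p (DT U p T0) = sg U T0"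
proof -
  have "fk U p (DT U p T0) = (\<Sum>T\<in>Pow U. if T = T0 then sg U T else 0)"
    unfolding fk_def
    by (rule sum.cong[OF refl]) (use DT_inj assms in auto)
  also have "\<dots> = sg U T0" using assms fU by simp
  finally show ?thesis .
qed

lemma fk_other:
  assumes "\<forall>T\<in>Pow U. D \<noteq> DT U p T"
  shows "fk U p D = 0"
  unfolding fk_def using assms by simp

lemma card_cnt:
  assumes "T \<subseteq> U"
  shows "card (B \<inter> DT U p T) = card {y\<in>U. if y \<in> T then y \<in> B else p y \<in> B}"
proof -
  have fT: "finite T" using finite_subset[OF assms fU] .
  have e1: "B \<inter> DT U p T = (B \<inter> T) \<union> p ` {y\<in>U - T. p y \<in> B}" unfolding DT_def by blast
  have d1: "(B \<inter> T) \<inter> p ` {y\<in>U - T. p y \<in> B} = {}" using assms p_notin by blast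
  have ci: "card (p ` {y\<in>U - T. p y \<in> B}) = card {y\<in>U - T. p y \<in> B}"
    by (rule card_image) (rule inj_on_subset[OF inj], blast)
  have e2: "{y\<in>U. if y \<in> T then y \<in> B else p y \<in> B} = (B \<inter> T) \<union> {y\<in>U - T. p y \<in> B}"
    using assms by auto
  have d2: "(B \<inter> T) \<inter> {y\<in>U - T. p y \<in> B} = {}" by blast
  have f3: "finite {y\<in>U - T. p y \<in> B}" using fU by simp
  show ?thesis
    unfolding e1 e2 using card_Un_disjoint[OF _ _ d1] card_Un_disjoint[OF _ f3 d2] ci fT f3 by simp
qed


lemma sg_flip:
  assumes "T \<subseteq> U" "x \<in> U"
  shows "sg U (if x \<in> T then T - {x} else insert x T) = - sg U T"
proof -
  let ?T' = "if x \<in> T then T - {x} else insert x T"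
  have "sg U ?T' = (if x \<in> ?T' then 1 else -1) * (\<Prod>y\<in>U - {x}. if y \<in> ?T' then 1 else -1)"
    unfolding sg_def using prod.remove[OF fU assms(2)] by blast
  also have "(\<Prod>y\<in>U - {x}. if y \<in> ?T' then 1 else -1) = (\<Prod>y\<in>U - {x}. if y \<in> T then 1 else (-1::complex))"
    by (rule prod.cong) auto
  also have "sg U T = (if x \<in> T then 1 else -1) * (\<Prod>y\<in>U - {x}. if y \<in> T then 1 else -1)"
    unfolding sg_def using prod.remove[OF fU assms(2)] by blast
  ultimately show ?thesis by auto
qed

lemma sg_pow:
  assumes "R \<subseteq> U"
  shows "(\<Prod>y\<in>U. if y \<in> R then -1 else 1) = (-1::complex) ^ card R"
proof -
  have "(\<Prod>y\<in>U. if y \<in> R then -1 else (1::complex)) = (\<Prod>y\<in>U \<inter> {y. y \<in> R}. -1) * (\<Prod>y\<in>U \<inter> - {y. y \<in> R}. 1)"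
    by (rule prod.If_cases[OF fU])
  also have "U \<inter> {y. y \<in> R} = R" using assms by blast
  finally show ?thesis by simp
qed

lemma sg_diff:
  assumes "T \<subseteq> U" "T0 \<subseteq> U"
  shows "sg U T = sg U T0 * (-1) ^ card ((T - T0) \<union> (T0 - T))"
proof -
  have "sg U T = (\<Prod>y\<in>U. (if y \<in> T0 then 1 else -1) * (if y \<in> (T - T0) \<union> (T0 - T) then -1 else (1::complex)))"
    unfolding sg_def by (rule prod.cong) auto
  also have "\<dots> = sg U T0 * (\<Prod>y\<in>U. if y \<in> (T - T0) \<union> (T0 - T) then -1 else (1::complex))"
    unfolding sg_def by (rule prod.distrib)
  also have "\<dots> = sg U T0 * (-1) ^ card ((T - T0) \<union> (T0 - T))"
    using sg_pow[of "(T - T0) \<union> (T0 - T)"] assms by auto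
  finally show ?thesis .
qed

definition FF :: "nat \<Rightarrow> nat set \<Rightarrow> complex" where
  "FF i B = (\<Sum>T\<in>Pow U. if card (B \<inter> DT U p T) = i then sg U T else 0)"

lemma FF_zero:
  assumes "x \<in> U" "x \<in> B \<longleftrightarrow> p x \<in> B"
  shows "FF i B = 0"
proof -
  let ?fl = "\<lambda>T. if x \<in> T then T - {x} else insert x T"
  let ?phi = "\<lambda>T. if card (B \<inter> DT U p T) = i then sg U T else 0"
  have cnt: "card (B \<inter> DT U p (?fl T)) = card (B \<inter> DT U p T)" if "T \<subseteq> U" for T
  proof -
    have "?fl T \<subseteq> U" using that assms(1) by auto
    then have "card (B \<inter> DT U p (?fl T)) = card {y\<in>U. if y \<in> ?fl T then y \<in> B else p y \<in> B}"
      by (rule card_cnt)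
    also have "{y\<in>U. if y \<in> ?fl T then y \<in> B else p y \<in> B} = {y\<in>U. if y \<in> T then y \<in> B else p y \<in> B}"
      using assms(2) by auto
    also have "card \<dots> = card (B \<inter> DT U p T)" using card_cnt[OF that] by simp
    finally show ?thesis .
  qed
  have "FF i B = (\<Sum>T\<in>Pow U. ?phi (?fl T))"
    unfolding FF_def
  proof (rule sum.reindex_bij_witness[where i = ?fl and j = ?fl])
    fix T assume T: "T \<in> Pow U"
    have ff: "?fl (?fl T) = T" by auto
    show "?fl (?fl T) = T" by (rule ff)
    show "?fl (?fl T) = T" by (rule ff)
    show "?fl T \<in> Pow U" using T assms(1) by auto
    show "?fl T \<in> Pow U" using T assms(1) by auto
    show "?phi (?fl (?fl T)) = ?phi T" using ff by simp
  qed
  also have "\<dots> = (\<Sum>T\<in>Pow U. - ?phi T)"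
  proof (rule sum.cong[OF refl])
    fix T assume "T \<in> Pow U"
    then have "T \<subseteq> U" by simp
    then show "?phi (?fl T) = - ?phi T" using cnt sg_flip[OF _ assms(1)] by simp
  qed
  also have "\<dots> = - FF i B" unfolding FF_def by (simp add: sum_negf)
  finally show ?thesis by simp
qed


lemma FF_DT:
  assumes "T0 \<subseteq> U" "i \<le> k"
  shows "FF i (DT U p T0) = ((-1) ^ (k - i) * of_nat (k choose i)) * sg U T0"
proof -
  let ?d = "\<lambda>T. (T - T0) \<union> (T0 - T)"
  let ?h = "\<lambda>R. if k - card R = i then sg U T0 * (-1) ^ card R else (0::complex)"
  have mem1: "y \<in> DT U p T0 \<longleftrightarrow> y \<in> T0" if "y \<in> U" for y
    using DT_U[OF assms(1)] that by blast
  have mem2: "p y \<in> DT U p T0 \<longleftrightarrow> y \<notin> T0" if "y \<in> U" for y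
  proof -
    have "p y \<notin> T0" using p_notin that assms(1) by blast
    moreover have "p y \<in> p ` (U - T0) \<longleftrightarrow> y \<in> U - T0"
      using inj_on_image_mem_iff[OF inj that, of "U - T0"] by blast
    ultimately show ?thesis unfolding DT_def using that by blast
  qed
  have cnt: "card (DT U p T0 \<inter> DT U p T) = k - card (?d T)" if "T \<subseteq> U" for T
  proof -
    have "card (DT U p T0 \<inter> DT U p T) = card {y\<in>U. if y \<in> T then y \<in> DT U p T0 else p y \<in> DT U p T0}"
      by (rule card_cnt[OF that])
    also have "{y\<in>U. if y \<in> T then y \<in> DT U p T0 else p y \<in> DT U p T0} = U - ?d T"
      using mem1 mem2 by auto
    also have "card (U - ?d T) = k - card (?d T)"
      using card_Diff_subset[of "?d T" U] finite_subset[OF _ fU, of "?d T"] that assms(1) cU by auto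
    finally show ?thesis .
  qed
  have "FF i (DT U p T0) = (\<Sum>T\<in>Pow U. ?h (?d T))"
    unfolding FF_def
  proof (rule sum.cong[OF refl])
    fix T assume "T \<in> Pow U"
    then have TU: "T \<subseteq> U" by simp
    show "(if card (DT U p T0 \<inter> DT U p T) = i then sg U T else 0) = ?h (?d T)"
      using cnt[OF TU] sg_diff[OF TU assms(1)] by simp
  qed
  also have "\<dots> = (\<Sum>R\<in>Pow U. ?h R)"
  proof (rule sum.reindex_bij_witness[where i = ?d and j = ?d])
    fix T assume T: "T \<in> Pow U"
    have ff: "?d (?d T) = T" by auto
    show "?d (?d T) = T" by (rule ff)
    show "?d (?d T) = T" by (rule ff)
    show "?d T \<in> Pow U" using T assms(1) by auto
    show "?d T \<in> Pow U" using T assms(1) by auto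
    show "?h (?d T) = ?h (?d T)" by simp
  qed
  also have "\<dots> = (\<Sum>R\<in>{R\<in>Pow U. card R = k - i}. sg U T0 * (-1) ^ (k - i))"
  proof -
    have "(\<Sum>R\<in>Pow U. ?h R) = (\<Sum>R\<in>Pow U. if card R = k - i then sg U T0 * (-1) ^ (k - i) else 0)"
    proof (rule sum.cong[OF refl])
      fix R assume "R \<in> Pow U"
      then have "card R \<le> k" using card_mono[OF fU] cU by auto
      then show "?h R = (if card R = k - i then sg U T0 * (-1) ^ (k - i) else 0)"
        using assms(2) by auto
    qed
    also have "\<dots> = (\<Sum>R\<in>{R\<in>Pow U. card R = k - i}. sg U T0 * (-1) ^ (k - i))"
      by (rule sum.inter_filter[symmetric]) (simp add: fU)
    finally show ?thesis .
  qed
  also have "\<dots> = of_nat (card {R\<in>Pow U. card R = k - i}) * (sg U T0 * (-1) ^ (k - i))" by simp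
  also have "card {R\<in>Pow U. card R = k - i} = k choose i"
  proof -
    have "{R\<in>Pow U. card R = k - i} = {R. R \<subseteq> U \<and> card R = k - i}" by auto
    then have "card {R\<in>Pow U. card R = k - i} = k choose (k - i)" using n_subsets[OF fU] cU by simp
    then show ?thesis using binomial_symmetric[OF assms(2)] by simp
  qed
  finally show ?thesis by (simp add: mult_ac)
qed

lemma transversal:
  assumes "B \<subseteq> {1..2*k}" "\<forall>x\<in>U. (x \<in> B \<longleftrightarrow> p x \<notin> B)"
  shows "B = DT U p (B \<inter> U)"
proof
  show "B \<subseteq> DT U p (B \<inter> U)"
  proof
    fix y assume y: "y \<in> B"
    show "y \<in> DT U p (B \<inter> U)"
    proof (cases "y \<in> U")
      case True then show ?thesis using y unfolding DT_def by blast
    next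
      case False
      then have "y \<in> p ` U" using pU y assms(1) by blast
      then obtain x where x: "x \<in> U" "y = p x" by blast
      then have "x \<notin> B" using assms(2) y by blast
      then show ?thesis using x unfolding DT_def by blast
    qed
  qed
  show "DT U p (B \<inter> U) \<subseteq> B" unfolding DT_def using assms(2) by blast
qed

lemma eig_fk:
  assumes "B \<in> J_vertices (2*k) k" "i < k"
  shows "(\<Sum>D\<in>J_vertices (2*k) k. adj_matrix (J_adj i) B D * fk U p D) = ((-1) ^ (k - i) * of_nat (k choose i)) * fk U p B"
proof -
  let ?V = "J_vertices (2*k) k"
  let ?N = "{D\<in>?V. card (D \<inter> B) = i}"
  have fN: "finite ?N" using J_fin by simp
  have "(\<Sum>D\<in>?V. adj_matrix (J_adj i) B D * fk U p D) = (\<Sum>D\<in>?N. fk U p D)"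
    by (rule J_adj_sum[OF assms])
  also have "\<dots> = (\<Sum>T\<in>Pow U. \<Sum>D\<in>?N. if D = DT U p T then sg U T else 0)"
    unfolding fk_def by (rule sum.swap)
  also have "\<dots> = FF i B"
    unfolding FF_def
  proof (rule sum.cong[OF refl])
    fix T assume "T \<in> Pow U"
    then have "DT U p T \<in> ?V" using DT_V by simp
    then have "DT U p T \<in> ?N \<longleftrightarrow> card (B \<inter> DT U p T) = i" by (simp add: Int_commute)
    then show "(\<Sum>D\<in>?N. if D = DT U p T then sg U T else 0) = (if card (B \<inter> DT U p T) = i then sg U T else 0)"
      using fN by (simp add: sum.delta')
  qed
  also have "\<dots> = ((-1) ^ (k - i) * of_nat (k choose i)) * fk U p B"
  proof (cases "\<exists>T0\<in>Pow U. B = DT U p T0")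
    case True
    then obtain T0 where "T0 \<subseteq> U" "B = DT U p T0" by auto
    then show ?thesis using FF_DT fk_DT assms(2) by simp
  next
    case False
    then have f0: "fk U p B = 0" by (intro fk_other) auto
    have "\<exists>x\<in>U. (x \<in> B \<longleftrightarrow> p x \<in> B)"
    proof (rule ccontr)
      assume "\<not> ?thesis"
      then have "\<forall>x\<in>U. (x \<in> B \<longleftrightarrow> p x \<notin> B)" by blast
      moreover have "B \<subseteq> {1..2*k}" using assms(1) by (simp add: J_vertices_def)
      ultimately have "B = DT U p (B \<inter> U)" using transversal by blast
      then show False using False by blast
    qed
    then obtain x where "x \<in> U" "x \<in> B \<longleftrightarrow> p x \<in> B" by blast
    then show ?thesis using FF_zero f0 by simp
  qed
  finally show ?thesis .
qed

end




theorem mainTheorem6: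
  fixes k i :: nat
  assumes "k \<ge> 2" and "1 \<le> i" and "i \<le> k - 1" and "even (k choose i)"
  shows "\<not> admits_PST (J_vertices (2 * k) k) (J_adj i)"
proof
  let ?V = "J_vertices (2 * k) k" and ?S = "{1..2*k}"
  assume "admits_PST ?V (J_adj i)"
  then obtain u v \<tau> where uV: "u \<in> ?V" and vV: "v \<in> ?V" and uv: "u \<noteq> v"
    and pst: "cmod (transition_matrix ?V (J_adj i) \<tau> u v) = 1"
    unfolding admits_PST_def by blast
  define \<gamma> where "\<gamma> = transition_matrix ?V (J_adj i) \<tau> u v"
  define c where "c = complex_of_real \<tau>"
  have g0: "\<gamma> \<noteq> 0" using pst by (auto simp: \<gamma>_def)
  have ik: "i < k" using assms by simp
  have rel: "exp (\<i> * c * \<theta>) * f u = \<gamma> * f v"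
    if eig: "\<And>B. B \<in> ?V \<Longrightarrow> (\<Sum>D\<in>?V. adj_matrix (J_adj i) B D * f D) = \<theta> * f B" for f \<theta>
    unfolding \<gamma>_def c_def by (rule pst_eigen[OF J_fin uV vV J_sym pst eig])
  let ?C = "k choose i" and ?a = "k - 1 choose i" and ?b = "k - 1 choose (i - 1)"
  define \<theta>0 where "\<theta>0 = (of_nat (?C * ?C) :: complex)"
  define \<theta>1 where "\<theta>1 = (of_nat ?C * (of_nat ?b - of_nat ?a) :: complex)"
  define \<theta>k where "\<theta>k = ((-1) ^ (k - i) * of_nat ?C :: complex)"
  have E0: "exp (\<i> * c * \<theta>0) = \<gamma>"
    using rel[of "\<lambda>_. 1" \<theta>0] eig_const[OF _ ik] unfolding \<theta>0_def by simp
  have E1: "exp (\<i> * c * \<theta>1) * (if x \<in> u then 1 else -1) = \<gamma> * (if x \<in> v then 1 else -1)"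
    if "x \<in> ?S" for x
    using rel[of "\<lambda>D. if x \<in> D then 1 else -1" \<theta>1] eig_g[OF _ assms(2) ik that] unfolding \<theta>1_def by simp
  have uS: "u \<subseteq> ?S" and cu: "card u = k" and vS: "v \<subseteq> ?S" and cv: "card v = k"
    using uV vV by (auto simp: J_vertices_def)
  have "\<not> u \<subseteq> v"
  proof
    assume "u \<subseteq> v"
    then have "u = v" using card_subset_eq[OF finite_subset[OF vS] _] cu cv by simp
    then show False using uv by simp
  qed
  then obtain x0 where x0: "x0 \<in> u" "x0 \<notin> v" by blast
  then have "exp (\<i> * c * \<theta>1) = - \<gamma>" using E1[of x0] uS by auto
  then have E1': "exp (\<i> * c * \<theta>1) = - \<gamma>" .
  have vc: "v = ?S - u"
  proof -
    have "x \<in> v \<longleftrightarrow> x \<notin> u" if "x \<in> ?S" for x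
    proof -
      have "- \<gamma> * (if x \<in> u then 1 else -1) = \<gamma> * (if x \<in> v then 1 else -1)"
        using E1[OF that] E1' by simp
      then show ?thesis using g0 by (auto split: if_splits)
    qed
    then show ?thesis using vS by blast
  qed
  have "card (?S - u) = k" using card_Diff_subset[OF finite_subset[OF uS] uS] cu by simp
  then obtain p where bij: "bij_betw p u (?S - u)"
    using finite_same_card_bij[of u "?S - u"] finite_subset[OF uS] cu by auto
  interpret M: matching k u p by unfold_locales (use uS cu bij in auto)
  have fku: "fk u p u = 1"
  proof -
    have "DT u p u = u" by (simp add: DT_def)
    then have "fk u p u = sg u u" using M.fk_DT[of u] by simp
    also have "\<dots> = 1" by (simp add: sg_def)
    finally show ?thesis .
  qed
  have fkv: "fk u p v = (-1) ^ k"
  proof -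
    have "DT u p {} = v" using M.pU vc by (simp add: DT_def)
    then have "fk u p v = sg u {}" using M.fk_DT[of "{}"] by simp
    also have "\<dots> = (-1) ^ k" using cu by (simp add: sg_def)
    finally show ?thesis .
  qed
  have Ek: "exp (\<i> * c * \<theta>k) = \<gamma> * (-1) ^ k"
    using rel[of "fk u p" \<theta>k] M.eig_fk[OF _ ik] fku fkv unfolding \<theta>k_def by simp
  have P: "?C = ?b + ?a" using pascal assms by simp
  have "?C > 0" using ik by simp
  then have Cpos: "?C \<ge> 1" by linarith
  define d where "d = (if even (k - i) then ?C - 1 else ?C + 1)"
  have "odd (?C - 1) \<and> odd (?C + 1)" using assms(4) Cpos by presburger
  then have dodd: "odd d" unfolding d_def by simp
  have d01: "\<theta>0 - \<theta>1 = of_nat (2 * ?a * ?C)"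
    unfolding \<theta>0_def \<theta>1_def using P by (simp add: algebra_simps)
  have d0k: "\<theta>0 - \<theta>k = of_nat (?C * d)"
    unfolding \<theta>0_def \<theta>k_def d_def using Cpos by (auto simp: algebra_simps of_nat_diff)
  define w where "w = exp (\<i> * c * (\<theta>0 - \<theta>1))"
  define z where "z = exp (\<i> * c * (\<theta>0 - \<theta>k))"
  have eq1: "\<i>*c*(\<theta>0-\<theta>1) + \<i>*c*\<theta>1 = \<i>*c*\<theta>0" by (simp add: algebra_simps)
  have "\<gamma> = w * (- \<gamma>)"
    unfolding w_def using E0 E1' exp_add[of "\<i>*c*(\<theta>0-\<theta>1)" "\<i>*c*\<theta>1"] eq1 by simp
  then have "\<gamma> * (w + 1) = 0" by (metis add.right_inverse distrib_left mult.commute mult_1_right mult_minus_left)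
  then have "w + 1 = 0" using g0 by simp
  then have w1: "w = -1" by (metis add.commute add_eq_0_iff)
  have eqk: "\<i>*c*(\<theta>0-\<theta>k) + \<i>*c*\<theta>k = \<i>*c*\<theta>0" by (simp add: algebra_simps)
  have "\<gamma> = z * (\<gamma> * (-1) ^ k)"
    unfolding z_def using E0 Ek exp_add[of "\<i>*c*(\<theta>0-\<theta>k)" "\<i>*c*\<theta>k"] eqk by simp
  then have "\<gamma> * (z * (-1) ^ k - 1) = 0" by (simp add: right_diff_distrib mult_ac)
  then have zk: "z * (-1) ^ k = 1" using g0 by simp
  have "((-1::complex) ^ k) ^ 2 = 1" by (metis power_mult_distrib mult_minus1 power_one neg_one_even_power even_mult_iff even_numeral power2_eq_square power_mult)
  then have "(z * (-1) ^ k) ^ 2 = z ^ 2" by (simp add: power_mult_distrib)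
  then have "z ^ 2 = 1" using zk by simp
  then have zp: "z ^ (2 * ?a) = 1" by (simp add: power_mult)
  have "w ^ d = exp (of_nat d * (\<i> * c * (\<theta>0 - \<theta>1)))" unfolding w_def by (rule exp_of_nat_mult[symmetric])
  also have "of_nat d * (\<i> * c * (\<theta>0 - \<theta>1)) = of_nat (2 * ?a) * (\<i> * c * (\<theta>0 - \<theta>k))"
    unfolding d01 d0k by (simp add: algebra_simps)
  also have "exp \<dots> = z ^ (2 * ?a)" unfolding z_def by (rule exp_of_nat_mult)
  finally have "w ^ d = 1" using zp by simp
  moreover have "w ^ d = -1" using w1 dodd by simp
  ultimately show False by simp
qed


end
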